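(* Let $a,b,d,f\in\mathbb{C}$ with $b\neq0$ and $d\neq 0$. Then the node-wise equi-M sets of the two nodes coincide: $\mathcal{M}(z_1)=\mathcal{M}(z_2)$.
   Context: For $c\in\mathbb{C}$, the 2D coupled quadratic system with connectivity matrix $A=\begin{pmatrix}a&b\\ d&f\end{pmatrix}$ is the iteration $z_1(n+1)=(az_1(n)+bz_2(n))^2+c$, $z_2(n+1)=(dz_1(n)+fz_2(n))^2+c$. The critical orbit is the orbit with $z_1(0)=z_2(0)=0$. The node-wise equi-M set $\mathcal{M}(z_k)$ ($k=1,2$) is the set of $c\in\mathbb{C}$ for which the sequence $(z_k(n))_{n\ge0}$ of the critical orbit is bounded. *)

theory Defs
  imports "HOL-Analysis.Analysis"
begin

fun crit_orbit :: "complex \<Rightarrow> complex \<Rightarrow> complex \<Rightarrow> complex \<Rightarrow> complex \<Rightarrow> nat \<Rightarrow> complex \<times> complex" where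
  "crit_orbit a b d f c 0 = (0, 0)"
| "crit_orbit a b d f c (Suc n) =
     (let z1 = fst (crit_orbit a b d f c n); z2 = snd (crit_orbit a b d f c n)
      in ((a * z1 + b * z2)^2 + c, (d * z1 + f * z2)^2 + c))"

definition equiM1 :: "complex \<Rightarrow> complex \<Rightarrow> complex \<Rightarrow> complex \<Rightarrow> complex set" where
  "equiM1 a b d f = {c. bounded (range (\<lambda>n. fst (crit_orbit a b d f c n)))}"

definition equiM2 :: "complex \<Rightarrow> complex \<Rightarrow> complex \<Rightarrow> complex \<Rightarrow> complex set" where
  "equiM2 a b d f = {c. bounded (range (\<lambda>n. snd (crit_orbit a b d f c n)))}"

end

theory Submission
  imports Defs
begin

lemma bnd_transfer:
  fixes x y :: "nat \<Rightarrow> complex" and a b c :: complex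
  assumes rec: "\<And>n. x (Suc n) = (a * x n + b * y n)^2 + c"
    and b: "b \<noteq> 0" and bx: "bounded (range x)"
  shows "bounded (range y)"
proof -
  obtain M where M: "\<And>n. norm (x n) \<le> M" using bx unfolding bounded_iff by blast
  have "norm (y n) \<le> (sqrt (M + norm c) + norm a * M) / norm b" for n
  proof -
    have "(a * x n + b * y n)^2 = x (Suc n) - c" using rec[of n] by simp
    hence "norm ((a * x n + b * y n)^2) \<le> M + norm c"
      using M[of "Suc n"] norm_triangle_ineq4[of "x (Suc n)" c] by simp
    hence "(norm (a * x n + b * y n))^2 \<le> M + norm c" by (simp add: norm_power)
    hence s: "norm (a * x n + b * y n) \<le> sqrt (M + norm c)" by (rule real_le_rsqrt)
    have ax: "norm (a * x n) \<le> norm a * M"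
      using M[of n] by (simp add: norm_mult mult_left_mono)
    have "b * y n = (a * x n + b * y n) - a * x n" by simp
    hence "norm (b * y n) \<le> norm (a * x n + b * y n) + norm (a * x n)"
      by (metis norm_triangle_ineq4)
    hence "norm b * norm (y n) \<le> sqrt (M + norm c) + norm a * M"
      using s ax by (simp add: norm_mult)
    thus ?thesis using b by (simp add: field_simps)
  qed
  thus ?thesis unfolding bounded_iff by blast
qed

theorem mainTheorem7:
  fixes a b d f :: complex
  assumes "b \<noteq> 0" and "d \<noteq> 0"
  shows "equiM1 a b d f = equiM2 a b d f"
proof -
  have r1: "\<And>n. fst (crit_orbit a b d f c (Suc n)) =
     (a * fst (crit_orbit a b d f c n) + b * snd (crit_orbit a b d f c n))^2 + c" for c
    by (simp add: Let_def)
  have r2: "\<And>n. snd (crit_orbit a b d f c (Suc n)) =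
     (f * snd (crit_orbit a b d f c n) + d * fst (crit_orbit a b d f c n))^2 + c" for c
    by (simp add: Let_def add.commute)
  show ?thesis
  proof (rule set_eqI)
    fix c
    show "c \<in> equiM1 a b d f \<longleftrightarrow> c \<in> equiM2 a b d f"
      unfolding equiM1_def equiM2_def mem_Collect_eq
      using bnd_transfer[where x="\<lambda>n. fst (crit_orbit a b d f c n)"
              and y="\<lambda>n. snd (crit_orbit a b d f c n)", OF r1 assms(1)]
            bnd_transfer[where x="\<lambda>n. snd (crit_orbit a b d f c n)"
              and y="\<lambda>n. fst (crit_orbit a b d f c n)", OF r2 assms(2)] by blast
  qed
qed

end
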